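(* Let $n > 2k+1$. On every instance, the output set of the algorithm DetMaxFind contains the uncorrupted maximum (and has exactly $2k+1$ elements).
   Context: Model: $n$ elements $x_1,\dots,x_n$, exactly $k$ corrupted (unknown to the algorithm); a tournament (comparison graph) says for each pair which is larger; restricted to uncorrupted elements it is acyclic, while comparisons involving corrupted elements are arbitrary. The uncorrupted maximum is the uncorrupted element larger than every other uncorrupted element. Algorithm DetMaxFind: start with $S=\emptyset$. For $i = 1,\dots,n$: compare $x_i$ with every element currently in $S$ (storing all results), set $S \leftarrow S \cup \{x_i\}$, and if $|S| > 2k+1$ (so $|S| = 2k+2$), choose some element $\bar x \in S$ that is smaller than at least $k+1$ other elements of $S$ (such an element exists by pigeonhole, and is found from the stored comparisons) and remove it from $S$. Output $S$. *)

theory Defs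
  imports Main
begin

text \<open>Elements are indexed 0..<n.  gt i j means: the comparison between x_i and x_j
  says that x_i is larger.  C is the set of corrupted indices.\<close>

definition is_tournament :: "nat \<Rightarrow> (nat \<Rightarrow> nat \<Rightarrow> bool) \<Rightarrow> bool" where
  "is_tournament n gt \<longleftrightarrow>
     (\<forall>i<n. \<forall>j<n. i \<noteq> j \<longrightarrow> (gt i j \<longleftrightarrow> \<not> gt j i))"

definition uncorrupted :: "nat \<Rightarrow> nat set \<Rightarrow> nat set" where
  "uncorrupted n C = {..<n} - C"

definition consistent_uncorrupted :: "nat \<Rightarrow> nat set \<Rightarrow> (nat \<Rightarrow> nat \<Rightarrow> bool) \<Rightarrow> bool" where
  "consistent_uncorrupted n C gt \<longleftrightarrow>
     acyclic {(i, j). i \<in> uncorrupted n C \<and> j \<in> uncorrupted n C \<and> gt i j}"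

definition is_uncorrupted_max :: "nat \<Rightarrow> nat set \<Rightarrow> (nat \<Rightarrow> nat \<Rightarrow> bool) \<Rightarrow> nat \<Rightarrow> bool" where
  "is_uncorrupted_max n C gt u \<longleftrightarrow>
     u \<in> uncorrupted n C \<and> (\<forall>v \<in> uncorrupted n C. v \<noteq> u \<longrightarrow> gt u v)"

text \<open>One iteration of DetMaxFind processing element i (all choices of the removed
  element are allowed).\<close>
definition detmax_step :: "(nat \<Rightarrow> nat \<Rightarrow> bool) \<Rightarrow> nat \<Rightarrow> nat \<Rightarrow> nat set \<Rightarrow> nat set \<Rightarrow> bool" where
  "detmax_step gt k i S S' \<longleftrightarrow>
     (let S1 = insert i S in
      if card S1 \<le> 2 * k + 1 then S' = S1
      else (\<exists>x \<in> S1. card {y \<in> S1. y \<noteq> x \<and> gt y x} \<ge> k + 1 \<and> S' = S1 - {x}))"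

inductive detmax_reach :: "(nat \<Rightarrow> nat \<Rightarrow> bool) \<Rightarrow> nat \<Rightarrow> nat \<Rightarrow> nat set \<Rightarrow> bool"
  for gt :: "nat \<Rightarrow> nat \<Rightarrow> bool" and k :: nat where
  init: "detmax_reach gt k 0 {}"
| step: "detmax_reach gt k i S \<Longrightarrow> detmax_step gt k i S S' \<Longrightarrow> detmax_reach gt k (Suc i) S'"

end

theory Submission
  imports Defs
begin

lemma pigeon:
  fixes S1 :: "nat set"
  assumes fin: "finite S1" and cS: "card S1 = 2*k+2"
    and tour: "\<And>x y. x \<in> S1 \<Longrightarrow> y \<in> S1 \<Longrightarrow> x \<noteq> y \<Longrightarrow> gt x y \<longleftrightarrow> \<not> gt y x"
  shows "\<exists>x \<in> S1. card {y \<in> S1. y \<noteq> x \<and> gt y x} \<ge> k + 1"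
proof (rule ccontr)
  assume "\<not> ?thesis"
  hence le: "\<And>x. x \<in> S1 \<Longrightarrow> card {y \<in> S1. y \<noteq> x \<and> gt y x} \<le> k" by force
  define Q where "Q = (SIGMA x:S1. {y \<in> S1. y \<noteq> x \<and> gt y x})"
  define W where "W = (SIGMA x:S1. {y \<in> S1. y \<noteq> x \<and> gt x y})"
  have cQ: "card Q = (\<Sum>x\<in>S1. card {y \<in> S1. y \<noteq> x \<and> gt y x})"
    unfolding Q_def using fin by (simp add: card_SigmaI)
  have "card Q \<le> (\<Sum>x\<in>S1. k)" unfolding cQ by (rule sum_mono) (use le in auto)
  hence Qle: "card Q \<le> (2*k+2)*k" using cS by simp
  have "W = (\<lambda>(a,b). (b,a)) ` Q" unfolding W_def Q_def by auto
  moreover have "inj_on (\<lambda>(a,b). (b,a)) Q" by (auto simp: inj_on_def)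
  ultimately have cW: "card W = card Q" by (simp add: card_image)
  have un: "Q \<union> W = (SIGMA x:S1. S1 - {x})"
  proof
    show "Q \<union> W \<subseteq> (SIGMA x:S1. S1 - {x})" unfolding Q_def W_def by blast
    show "(SIGMA x:S1. S1 - {x}) \<subseteq> Q \<union> W"
    proof
      fix p assume "p \<in> (SIGMA x:S1. S1 - {x})"
      then obtain a b where p: "p = (a,b)" "a \<in> S1" "b \<in> S1" "a \<noteq> b" by blast
      show "p \<in> Q \<union> W"
      proof (cases "gt a b")
        case True then show ?thesis using p unfolding W_def by blast
      next
        case False
        hence "gt b a" using tour[OF p(2,3,4)] by blast
        then show ?thesis using p unfolding Q_def by blast
      qed
    qed
  qed
  have dis: "Q \<inter> W = {}"
  proof (rule ccontr)
    assume "Q \<inter> W \<noteq> {}"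
    then obtain a b where "a \<in> S1" "b \<in> S1" "b \<noteq> a" "gt b a" "gt a b"
      unfolding Q_def W_def by blast
    with tour show False by blast
  qed
  have finQ: "finite Q" "finite W" unfolding Q_def W_def using fin by auto
  have "card (Q \<union> W) = card Q + card W" using card_Un_disjoint[OF finQ dis] .
  moreover have "card (SIGMA x:S1. S1 - {x}) = (\<Sum>x\<in>S1. card S1 - 1)"
    using fin by (simp add: card_SigmaI)
  ultimately have "2 * card Q = (2*k+2)*(2*k+1)" using un cW cS by simp
  with Qle show False by (simp add: algebra_simps)
qed

lemma inv:
  assumes "detmax_reach gt k i S" "i \<le> n" "is_tournament n gt"
    and maxu: "\<And>y. y < n \<Longrightarrow> y \<noteq> u \<Longrightarrow> gt y u \<Longrightarrow> y \<in> C"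
    and cC: "card C = k" "finite C"
  shows "S \<subseteq> {..<i} \<and> card S = min i (2*k+1) \<and> (u < i \<longrightarrow> u \<in> S)"
  using assms(1,2)
proof (induction rule: detmax_reach.induct)
  case init
  then show ?case by simp
next
  case (step i S S')
  then have IH: "S \<subseteq> {..<i}" "card S = min i (2*k+1)" "u < i \<longrightarrow> u \<in> S" by auto
  have fS: "finite S" using IH(1) finite_subset by blast
  have iS: "i \<notin> S" using IH(1) by auto
  have cI: "card (insert i S) = Suc (card S)" using fS iS by simp
  show ?case
  proof (cases "card (insert i S) \<le> 2*k+1")
    case True
    then have "S' = insert i S" using step(2) unfolding detmax_step_def Let_def by simp
    then show ?thesis using IH True cI by auto
  next
    case False
    then obtain x where x: "x \<in> insert i S" "card {y \<in> insert i S. y \<noteq> x \<and> gt y x} \<ge> k+1"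
      "S' = insert i S - {x}"
      using step(2) unfolding detmax_step_def Let_def by auto
    have xu: "x \<noteq> u"
    proof
      assume "x = u"
      have sub: "{y \<in> insert i S. y \<noteq> x \<and> gt y x} \<subseteq> C"
        using maxu \<open>x = u\<close> IH(1) step(4) by auto
      have "card {y \<in> insert i S. y \<noteq> x \<and> gt y x} \<le> card C"
        using card_mono[OF cC(2) sub] .
      with x(2) cC(1) show False by simp
    qed
    have c1: "card S' = card (insert i S) - 1" using x(1,3) fS by simp
    have c0: "card S \<le> 2*k+1" "card S = i \<or> card S = 2*k+1" "card S \<le> i"
      using IH(2) by (auto simp: min_def)
    have c2: "card (insert i S) = 2*k+2" using c0 cI False by linarith
    have c4: "Suc i > 2*k+1" using c0 cI False by linarith
    have c3: "card S' = min (Suc i) (2*k+1)" using c1 c2 c4 by (simp add: min_def)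
    have s1: "S' \<subseteq> {..<Suc i}"
    proof
      fix z assume "z \<in> S'"
      hence "z = i \<or> z \<in> S" using x(3) by blast
      thus "z \<in> {..<Suc i}" using IH(1) by (auto simp: lessThan_def)
    qed
    have s2: "u < Suc i \<longrightarrow> u \<in> S'"
    proof
      assume "u < Suc i"
      hence "u \<in> insert i S" using IH(3) by auto
      thus "u \<in> S'" using x(3) xu by auto
    qed
    show ?thesis using s1 c3 s2 by blast
  qed
qed

lemma reach_le:
  assumes "detmax_reach gt k i S"
  shows "S \<subseteq> {..<i} \<and> card S \<le> 2*k+1"
  using assms
proof (induction rule: detmax_reach.induct)
  case init then show ?case by simp
next
  case (step j T T')
  have fT: "finite T" using step.IH finite_subset by blast
  have jT: "j \<notin> T" using step.IH by auto
  have c: "card (insert j T) = Suc (card T)" using fT jT by simp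
  show ?case
  proof (cases "card (insert j T) \<le> 2*k+1")
    case True
    then show ?thesis using step.hyps(2) step.IH unfolding detmax_step_def Let_def by auto
  next
    case False
    then obtain x where x: "x \<in> insert j T" "T' = insert j T - {x}"
      using step.hyps(2) unfolding detmax_step_def Let_def by auto
    have "card T' = card (insert j T) - 1" using x fT by simp
    hence "card T' \<le> 2*k+1" using step.IH c by linarith
    moreover have "T' \<subseteq> {..<Suc j}"
    proof
      fix z assume "z \<in> T'"
      hence "z = j \<or> z \<in> T" using x(2) by blast
      thus "z \<in> {..<Suc j}" using step.IH by (auto simp: lessThan_def)
    qed
    ultimately show ?thesis by blast
  qed
qed

lemma exist:
  assumes "i \<le> n" "is_tournament n gt"
  shows "\<exists>S. detmax_reach gt k i S"
  using assms(1)
proof (induction i)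
  case 0
  then show ?case using detmax_reach.init by blast
next
  case (Suc i)
  then obtain S where S: "detmax_reach gt k i S" by auto
  have sub: "S \<subseteq> {..<i}" using reach_le[OF S] by simp
  have fS: "finite S" using sub finite_subset by blast
  have "\<exists>S'. detmax_step gt k i S S'"
  proof (cases "card (insert i S) \<le> 2*k+1")
    case True
    then show ?thesis unfolding detmax_step_def Let_def by simp
  next
    case False
    have "card S \<le> 2*k+1" using reach_le[OF S] by simp
    moreover have "i \<notin> S" using sub by auto
    hence "card (insert i S) = Suc (card S)" using fS by simp
    ultimately have cS': "card (insert i S) = 2*k+2" using False by linarith
    have tr: "gt x y \<longleftrightarrow> \<not> gt y x" if "x \<in> insert i S" "y \<in> insert i S" "x \<noteq> y" for x y
    proof -
      have "x < n" "y < n" using that sub Suc.prems by auto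
      have "\<forall>i<n. \<forall>j<n. i \<noteq> j \<longrightarrow> (gt i j \<longleftrightarrow> \<not> gt j i)"
        using assms(2) unfolding is_tournament_def .
      hence "x < n \<longrightarrow> (\<forall>j<n. x \<noteq> j \<longrightarrow> (gt x j \<longleftrightarrow> \<not> gt j x))" by (rule spec)
      hence "\<forall>j<n. x \<noteq> j \<longrightarrow> (gt x j \<longleftrightarrow> \<not> gt j x)" using \<open>x < n\<close> by (rule mp)
      hence "y < n \<longrightarrow> x \<noteq> y \<longrightarrow> (gt x y \<longleftrightarrow> \<not> gt y x)" by (rule spec)
      hence "x \<noteq> y \<longrightarrow> (gt x y \<longleftrightarrow> \<not> gt y x)" using \<open>y < n\<close> by (rule mp)
      thus ?thesis using that(3) by (rule mp)
    qed
    have fin: "finite (insert i S)" using fS by simp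
    from pigeon[OF fin cS' tr] obtain x where
      x: "x \<in> insert i S" "card {y \<in> insert i S. y \<noteq> x \<and> gt y x} \<ge> k + 1" ..
    have "\<exists>x' \<in> insert i S. card {y \<in> insert i S. y \<noteq> x' \<and> gt y x'} \<ge> k + 1 \<and>
        insert i S - {x} = insert i S - {x'}"
      using x by (intro bexI[of _ x]) simp_all
    hence "detmax_step gt k i S (insert i S - {x})"
      unfolding detmax_step_def Let_def using False by (simp only: if_False)
    then show ?thesis by blast
  qed
  then show ?case using S detmax_reach.step by blast
qed

theorem mainTheorem5:
  fixes n k :: nat and C :: "nat set" and gt :: "nat \<Rightarrow> nat \<Rightarrow> bool"
  assumes "n > 2 * k + 1"
    and "C \<subseteq> {..<n}" and "card C = k"
    and "is_tournament n gt"
    and "consistent_uncorrupted n C gt"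
  shows "(\<exists>S. detmax_reach gt k n S) \<and>
         (\<forall>S. detmax_reach gt k n S \<longrightarrow>
              card S = 2 * k + 1 \<and> (\<exists>u \<in> S. is_uncorrupted_max n C gt u))"
proof -
  let ?U = "uncorrupted n C"
  let ?R = "{(i, j). i \<in> ?U \<and> j \<in> ?U \<and> gt i j}"
  have fC: "finite C" using assms(2) finite_subset by blast
  have acy: "acyclic ?R" using assms(5) unfolding consistent_uncorrupted_def .
  have tour: "gt i j \<longleftrightarrow> \<not> gt j i" if "i < n" "j < n" "i \<noteq> j" for i j
  proof -
    have "\<forall>i<n. \<forall>j<n. i \<noteq> j \<longrightarrow> (gt i j \<longleftrightarrow> \<not> gt j i)"
      using assms(4) unfolding is_tournament_def .
    hence "i < n \<longrightarrow> (\<forall>j<n. i \<noteq> j \<longrightarrow> (gt i j \<longleftrightarrow> \<not> gt j i))" by (rule spec)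
    hence "\<forall>j<n. i \<noteq> j \<longrightarrow> (gt i j \<longleftrightarrow> \<not> gt j i)" using that(1) by (rule mp)
    hence "j < n \<longrightarrow> i \<noteq> j \<longrightarrow> (gt i j \<longleftrightarrow> \<not> gt j i)" by (rule spec)
    hence "i \<noteq> j \<longrightarrow> (gt i j \<longleftrightarrow> \<not> gt j i)" using that(2) by (rule mp)
    thus ?thesis using that(3) by (rule mp)
  qed
  have fU: "finite ?U" unfolding uncorrupted_def by simp
  have "card ?U = n - k" unfolding uncorrupted_def using assms(2,3) fC
    by (simp add: card_Diff_subset)
  hence neU: "?U \<noteq> {}" using assms(1) by auto
  have irr: "\<And>a. a \<in> ?U \<Longrightarrow> \<not> gt a a"
  proof
    fix a assume "a \<in> ?U" "gt a a"
    hence "(a,a) \<in> ?R\<^sup>+" by auto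
    with acy show False unfolding acyclic_def by blast
  qed
  have trans: "gt a c" if h: "a \<in> ?U" "b \<in> ?U" "c \<in> ?U" "gt a b" "gt b c" for a b c
  proof (rule ccontr)
    assume nac: "\<not> gt a c"
    have "a \<noteq> c"
    proof
      assume ac: "a = c"
      have r: "(a,b) \<in> ?R" "(b,a) \<in> ?R" using h ac by auto
      have "(a,a) \<in> ?R\<^sup>+"
        by (rule trancl_trans[OF r_into_trancl[OF r(1)] r_into_trancl[OF r(2)]])
      with acy show False unfolding acyclic_def by blast
    qed
    moreover have "a < n" "c < n" using h unfolding uncorrupted_def by auto
    ultimately have gca: "gt c a" using tour[of a c] nac by blast
    have r: "(a,b) \<in> ?R" "(b,c) \<in> ?R" "(c,a) \<in> ?R" using h gca by auto
    have "(a,a) \<in> ?R\<^sup>+"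
      by (rule trancl_trans[OF trancl_trans[OF r_into_trancl[OF r(1)] r_into_trancl[OF r(2)]] r_into_trancl[OF r(3)]])
    with acy show False unfolding acyclic_def by blast
  qed
  have mx: "\<exists>m\<in>A. \<forall>v\<in>A. v \<noteq> m \<longrightarrow> gt m v" if "finite A" "A \<noteq> {}" "A \<subseteq> ?U" for A
    using that
  proof (induction A rule: finite_ne_induct)
    case (singleton x) then show ?case by simp
  next
    case (insert x F)
    then obtain m where m: "m \<in> F" "\<forall>v\<in>F. v \<noteq> m \<longrightarrow> gt m v" by auto
    have xm: "x \<noteq> m" using insert m by auto
    have xU: "x \<in> ?U" "m \<in> ?U" using insert m by auto
    show ?case
    proof (cases "gt m x")
      case True then show ?thesis using m by auto
    next
      case False
      have "x < n" "m < n" using xU unfolding uncorrupted_def by auto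
      hence gxm: "gt x m" using tour[of x m] xm False by blast
      have "\<forall>v\<in>insert x F. v \<noteq> x \<longrightarrow> gt x v"
      proof (intro ballI impI)
        fix v assume v: "v \<in> insert x F" "v \<noteq> x"
        hence vF: "v \<in> F" by auto
        show "gt x v"
        proof (cases "v = m")
          case True then show ?thesis using gxm by simp
        next
          case False
          have "gt m v" using m(2) vF False by blast
          moreover have "v \<in> ?U" using vF insert.prems by blast
          ultimately show ?thesis using trans[of x m v] gxm xU by blast
        qed
      qed
      then show ?thesis by auto
    qed
  qed
  obtain u where u: "u \<in> ?U" "\<forall>v\<in>?U. v \<noteq> u \<longrightarrow> gt u v"
    using mx[OF fU neU] by auto
  have umax: "is_uncorrupted_max n C gt u" unfolding is_uncorrupted_max_def using u by auto
  have beat: "y \<in> C" if "y < n" "y \<noteq> u" "gt y u" for y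
  proof (rule ccontr)
    assume "y \<notin> C"
    hence "y \<in> ?U" using that unfolding uncorrupted_def by auto
    hence "gt u y" using u(2) that(2) by blast
    moreover have "u < n" using u(1) unfolding uncorrupted_def by auto
    ultimately show False using tour[of y u] that by blast
  qed
  have un: "u < n" using u(1) unfolding uncorrupted_def by auto
  show ?thesis
  proof (rule conjI)
    show "\<exists>S. detmax_reach gt k n S" using exist[OF order_refl assms(4)] .
  next
    show "\<forall>S. detmax_reach gt k n S \<longrightarrow> card S = 2 * k + 1 \<and> (\<exists>u \<in> S. is_uncorrupted_max n C gt u)"
    proof (intro allI impI)
      fix S assume "detmax_reach gt k n S"
      have I: "card S = min n (2*k+1)" "u < n \<longrightarrow> u \<in> S"
        using inv[OF \<open>detmax_reach gt k n S\<close> order_refl assms(4) beat assms(3) fC] by blast+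
      have "card S = 2*k+1" using I(1) assms(1) by simp
      moreover have "u \<in> S" using I(2) un by blast
      ultimately show "card S = 2 * k + 1 \<and> (\<exists>u \<in> S. is_uncorrupted_max n C gt u)"
        using umax by blast
    qed
  qed
qed

end
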